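(* Let $e,d,t$ be positive integers with $\gcd(e,d)=1$. Suppose $S=\langle e,e+d,e+2d,\dots,e+td\rangle$ is a numerical semigroup whose minimal generating set is $\{e,e+d,\dots,e+td\}$. Then ${\rm d}_{\max}(S)$ equals the number of integer partitions of $e-1$ into parts from $\{1,2,\dots,t\}$.
   Context: A numerical semigroup is a submonoid of $(\mathbb N,+)$ with finite complement. For $S$ with minimal generators $a_0<a_1<\dots<a_t$, an $S$-factorization of $n\in S$ is $(c_0,\dots,c_t)\in\mathbb N^{t+1}$ with $\sum c_ia_i=n$, of length $\sum c_i$. ${\rm ord}(n;S)$ is the maximal length, ${\rm d}_{\max}(n;S)$ is the number of $S$-factorizations of $n$ of length ${\rm ord}(n;S)$, and ${\rm d}_{\max}(S)=\max_{n\in S}{\rm d}_{\max}(n;S)$. *)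

theory Defs
  imports Main
begin

definition numerical_semigroup :: "nat set \<Rightarrow> bool" where
  "numerical_semigroup S \<longleftrightarrow> 0 \<in> S \<and> (\<forall>x\<in>S. \<forall>y\<in>S. x + y \<in> S) \<and> finite (UNIV - S)"

definition monoid_gen :: "nat set \<Rightarrow> nat set" where
  "monoid_gen A = {n. \<exists>c :: nat \<Rightarrow> nat. n = (\<Sum>a\<in>A. c a * a)}"

definition minimal_generators :: "nat set \<Rightarrow> nat set" where
  "minimal_generators S = {x \<in> S. x \<noteq> 0 \<and>
     \<not> (\<exists>a\<in>S. \<exists>b\<in>S. a \<noteq> 0 \<and> b \<noteq> 0 \<and> x = a + b)}"

definition gens :: "nat set \<Rightarrow> nat list" where
  "gens S = sorted_list_of_set (minimal_generators S)"

definition factorizations :: "nat \<Rightarrow> nat set \<Rightarrow> nat list set" where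
  "factorizations n S = {c. length c = length (gens S) \<and>
      (\<Sum>i<length (gens S). c ! i * gens S ! i) = n}"

definition fact_len :: "nat list \<Rightarrow> nat" where
  "fact_len c = sum_list c"

definition ord_S :: "nat \<Rightarrow> nat set \<Rightarrow> nat" where
  "ord_S n S = Max (fact_len ` factorizations n S)"

definition dmax_elem :: "nat \<Rightarrow> nat set \<Rightarrow> nat" where
  "dmax_elem n S = card {c \<in> factorizations n S. fact_len c = ord_S n S}"

definition dmax :: "nat set \<Rightarrow> nat" where
  "dmax S = Max {dmax_elem n S | n. n \<in> S}"

definition num_partitions_bounded :: "nat \<Rightarrow> nat \<Rightarrow> nat" where
  "num_partitions_bounded m t = card {mu :: nat \<Rightarrow> nat.
      (\<forall>i. mu i \<noteq> 0 \<longrightarrow> i \<in> {1..t}) \<and> (\<Sum>i\<in>{1..t}. i * mu i) = m}"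

end

theory Submission
  imports Defs
begin

definition WW :: "nat list \<Rightarrow> nat" where "WW c = (\<Sum>i<length c. i * c!i)"

lemma val_eq:
  assumes "length c = Suc t"
  shows "(\<Sum>i<Suc t. c!i * (e + i*d)) = e * sum_list c + d * WW c"
proof -
  have "(\<Sum>i<Suc t. c!i * (e + i*d)) = (\<Sum>i<Suc t. e * c!i + d * (i * c!i))"
    by (simp add: algebra_simps)
  also have "\<dots> = e * (\<Sum>i<Suc t. c!i) + d * (\<Sum>i<Suc t. i * c!i)"
    by (simp add: sum.distrib sum_distrib_left del: sum.lessThan_Suc)
  also have "(\<Sum>i<Suc t. c!i) = sum_list c"
    using assms by (simp add: sum_list_sum_nth atLeast0LessThan)
  finally show ?thesis using assms by (simp add: WW_def)
qed

lemma WW_alt: "length c = Suc t \<Longrightarrow> WW c = (\<Sum>i\<in>{1..t}. i * c!i)"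
proof -
  assume "length c = Suc t"
  moreover have "{..<Suc t} = insert 0 {1..t}" by auto
  ultimately show ?thesis by (simp add: WW_def)
qed

lemma SL_alt: "length c = Suc t \<Longrightarrow> sum_list c = c!0 + (\<Sum>i\<in>{1..t}. c!i)"
proof -
  assume "length c = Suc t"
  moreover have "{..<Suc t} = insert 0 {1..t}" by auto
  ultimately show ?thesis by (simp add: sum_list_sum_nth atLeast0LessThan)
qed

lemma WW_le: "length c = Suc t \<Longrightarrow> WW c \<le> t * sum_list c"
proof -
  assume l: "length c = Suc t"
  have "WW c = (\<Sum>i<Suc t. i * c!i)" using l by (simp add: WW_def)
  also have "\<dots> \<le> (\<Sum>i<Suc t. t * c!i)" by (rule sum_mono) auto
  also have "\<dots> = t * sum_list c" using l by (simp add: sum_list_sum_nth atLeast0LessThan sum_distrib_left del: sum.lessThan_Suc)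
  finally show ?thesis .
qed

lemma exist_list: "s \<le> t * N \<Longrightarrow> \<exists>c. length c = Suc t \<and> sum_list c = N \<and> WW c = s"
proof (induction N arbitrary: s)
  case 0
  then show ?case by (intro exI[of _ "replicate (Suc t) 0"]) (auto simp: WW_def intro!: sum.neutral simp del: replicate_Suc)
next
  case (Suc N)
  define j where "j = min s t"
  have "s - j \<le> t * N" using Suc.prems by (auto simp: j_def)
  then obtain c where c: "length c = Suc t" "sum_list c = N" "WW c = s - j" using Suc.IH by blast
  define c' where "c' = c[j := c!j + 1]"
  have jl: "j < Suc t" by (simp add: j_def)
  have nth: "\<And>i. i < Suc t \<Longrightarrow> c'!i = c!i + (if i = j then 1 else 0)"
    using c(1) jl by (auto simp: c'_def nth_list_update)
  have l': "length c' = Suc t" using c by (simp add: c'_def)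
  have "sum_list c' = sum_list c + 1"
    using c(1) jl by (simp add: c'_def sum_list_update)
  moreover have "WW c' = WW c + j"
  proof -
    have "WW c' = (\<Sum>i<Suc t. i * c!i + (if i = j then j else 0))"
      using l' nth by (auto simp: WW_def intro!: sum.cong)
    also have "\<dots> = WW c + j" using c(1) jl by (simp add: sum.distrib WW_def)
    finally show ?thesis .
  qed
  ultimately show ?case using c l' by (intro exI[of _ c']) (auto simp: j_def)
qed

definition FFs :: "nat \<Rightarrow> nat \<Rightarrow> nat \<Rightarrow> nat \<Rightarrow> nat list set" where
  "FFs e d t n = {c. length c = Suc t \<and> e * sum_list c + d * WW c = n}"

definition Pt :: "nat \<Rightarrow> nat \<Rightarrow> (nat \<Rightarrow> nat) set" where
  "Pt t m = {mu :: nat \<Rightarrow> nat. (\<forall>i. mu i \<noteq> 0 \<longrightarrow> i \<in> {1..t}) \<and> (\<Sum>i\<in>{1..t}. i * mu i) = m}"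

lemma finite_FFs: assumes "e > 0" shows "finite (FFs e d t n)"
proof (rule finite_subset)
  show "FFs e d t n \<subseteq> {xs. set xs \<subseteq> {0..n} \<and> length xs = Suc t}"
  proof
    fix c assume "c \<in> FFs e d t n"
    hence c: "length c = Suc t" "e * sum_list c + d * WW c = n" by (auto simp: FFs_def)
    have "1 * sum_list c \<le> e * sum_list c" by (rule mult_le_mono1) (use assms in simp)
    then have "sum_list c \<le> n" using c(2) by linarith
    then have "set c \<subseteq> {0..n}" using member_le_sum_list[of _ c] by fastforce
    then show "c \<in> {xs. set xs \<subseteq> {0..n} \<and> length xs = Suc t}" using c by auto
  qed
  show "finite {xs. set xs \<subseteq> {0..n} \<and> length xs = Suc (t::nat)}"
    by (rule finite_lists_length_eq) auto
qed

lemma finite_Pt: "finite (Pt t m)"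
proof (rule finite_subset)
  let ?toF = "\<lambda>l::nat list. \<lambda>i. if i \<in> {1..t} then l!i else 0"
  show "Pt t m \<subseteq> ?toF ` {xs. set xs \<subseteq> {0..m} \<and> length xs = Suc t}"
  proof
    fix mu assume "mu \<in> Pt t m"
    hence mu: "\<forall>i. mu i \<noteq> 0 \<longrightarrow> i \<in> {1..t}" "(\<Sum>i\<in>{1..t}. i * mu i) = m" by (auto simp: Pt_def)
    have b: "mu i \<le> m" for i
    proof (cases "i \<in> {1..t}")
      case True
      have "mu i \<le> i * mu i" using True by simp
      also have "\<dots> \<le> (\<Sum>i\<in>{1..t}. i * mu i)" by (rule member_le_sum) (use True in auto)
      finally show ?thesis using mu(2) by simp
    next
      case False then show ?thesis using mu(1) by force
    qed
    have "mu = ?toF (map mu [0..<Suc t])"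
      using mu(1) by (auto simp: fun_eq_iff nth_map simp del: upt_Suc)
    moreover have "map mu [0..<Suc t] \<in> {xs. set xs \<subseteq> {0..m} \<and> length xs = Suc t}"
      using b by auto
    ultimately show "mu \<in> ?toF ` {xs. set xs \<subseteq> {0..m} \<and> length xs = Suc t}" by blast
  qed
  show "finite (?toF ` {xs. set xs \<subseteq> {0..m} \<and> length xs = Suc t})"
    by (rule finite_imageI, rule finite_lists_length_eq) auto
qed

lemma bound:
  assumes "e > 0" "d > 0" "t > 0" "FFs e d t n \<noteq> {}"
  shows "card {c \<in> FFs e d t n. sum_list c = Max (sum_list ` FFs e d t n)} \<le> card (Pt t (e-1))"
proof -
  let ?F = "FFs e d t n"
  define L where "L = Max (sum_list ` ?F)"
  have fin: "finite ?F" by (rule finite_FFs) fact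
  have "L \<in> sum_list ` ?F" unfolding L_def using fin assms(4) by (intro Max_in) auto
  then obtain c0 where c0: "c0 \<in> ?F" "sum_list c0 = L" by auto
  have maxL: "sum_list c \<le> L" if "c \<in> ?F" for c unfolding L_def using fin that by (intro Max_ge) auto
  define k where "k = WW c0"
  have c0': "length c0 = Suc t" "e*L + d*k = n" using c0 by (auto simp: FFs_def k_def)
  have klt: "k < e"
  proof (rule ccontr)
    assume "\<not> k < e"
    then obtain r where r: "k = e + r" using nat_le_iff_add by (metis not_less)
    have "k \<le> t*L" using WW_le[OF c0'(1)] c0(2) k_def by simp
    moreover have "t*L \<le> t*(L+d)" by simp
    ultimately have "r \<le> t*(L+d)" using r by linarith
    then obtain c' where c': "length c' = Suc t" "sum_list c' = L+d" "WW c' = r" using exist_list by blast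
    have "e*(L+d) + d*r = n" using c0'(2) r by (simp add: algebra_simps)
    hence "c' \<in> ?F" using c' by (simp add: FFs_def)
    from maxL[OF this] c' assms(2) show False by simp
  qed
  define phi where "phi c = (\<lambda>i. if i = 1 then c!1 + (e-1-k) else if i \<in> {1..t} then c!i else 0)" for c :: "nat list"
  let ?M = "{c. length c = Suc t \<and> sum_list c = L \<and> WW c = k}"
  have M: "{c \<in> ?F. sum_list c = L} = ?M"
    using c0'(2) assms(2) by (auto simp: FFs_def)
  have "inj_on phi ?M"
  proof (rule inj_onI)
    fix c c' assume c: "c \<in> ?M" and c': "c' \<in> ?M" and eq: "phi c = phi c'"
    have a: "c!i = c'!i" if "i \<in> {1..t}" for i
      using fun_cong[OF eq, of i] that by (auto simp: phi_def split: if_splits)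
    have "(\<Sum>i\<in>{1..t}. c!i) = (\<Sum>i\<in>{1..t}. c'!i)" using a by (rule sum.cong[OF refl])
    hence a0: "c!0 = c'!0" using SL_alt[of c t] SL_alt[of c' t] c c' by auto
    show "c = c'"
    proof (rule nth_equalityI)
      show "length c = length c'" using c c' by simp
      fix i assume "i < length c"
      then have "i = 0 \<or> i \<in> {1..t}" using c by auto
      then show "c!i = c'!i" using a a0 by blast
    qed
  qed
  moreover have "phi ` ?M \<subseteq> Pt t (e-1)"
  proof
    fix x assume "x \<in> phi ` ?M"
    then obtain c where c: "c \<in> ?M" and x: "x = phi c" by auto
    have 1: "\<forall>i. x i \<noteq> 0 \<longrightarrow> i \<in> {1..t}" using assms(3) by (auto simp: x phi_def)
    have "(\<Sum>i\<in>{1..t}. i * x i) = (\<Sum>i\<in>{1..t}. i * c!i + (if i = 1 then e-1-k else 0))"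
      by (rule sum.cong) (auto simp: x phi_def)
    also have "\<dots> = WW c + (e-1-k)" using c assms(3) WW_alt[of c t] by (simp add: sum.distrib)
    also have "\<dots> = e - 1" using c klt by simp
    finally show "x \<in> Pt t (e-1)" using 1 by (simp add: Pt_def)
  qed
  ultimately have "card ?M \<le> card (Pt t (e-1))" by (intro card_inj_on_le finite_Pt)
  then show ?thesis using M L_def by simp
qed

lemma attain:
  assumes "e > 0" "d > 0" "t > 0" "coprime e d"
  shows "FFs e d t (e*(e-1) + d*(e-1)) \<noteq> {}" and
    "card (Pt t (e-1)) \<le> card {c \<in> FFs e d t (e*(e-1) + d*(e-1)).
        sum_list c = Max (sum_list ` FFs e d t (e*(e-1) + d*(e-1)))}"
proof -
  let ?F = "FFs e d t (e*(e-1) + d*(e-1))"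
  have "e - 1 \<le> t * (e-1)" using assms(3) by simp
  then obtain c1 where c1: "length c1 = Suc t" "sum_list c1 = e-1" "WW c1 = e-1" using exist_list by blast
  have c1F: "c1 \<in> ?F" using c1 by (simp add: FFs_def)
  then show "?F \<noteq> {}" by auto
  have fin: "finite ?F" by (rule finite_FFs) fact
  have le: "sum_list c \<le> e-1" if "c \<in> ?F" for c
  proof (rule ccontr)
    assume "\<not> sum_list c \<le> e-1"
    then obtain a where a: "sum_list c = (e-1) + a" "a > 0" using nat_le_iff_add
      by (metis add_diff_cancel_left' less_imp_le_nat not_le zero_less_diff)
    have eq: "e*(e-1) + e*a + d * WW c = e*(e-1) + d*(e-1)" using that a by (simp add: FFs_def algebra_simps)
    hence eq2: "e*a + d*WW c = d*(e-1)" by simp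
    hence "d * WW c \<le> d*(e-1)" by linarith
    hence "WW c \<le> e-1" using assms(2) by simp
    define x where "x = e-1 - WW c"
    have "e-1 = WW c + x" using \<open>WW c \<le> e-1\<close> by (simp add: x_def)
    hence "d*(e-1) = d * WW c + d * x" by (metis distrib_left)
    hence ex: "e*a = d*x" using eq2 by simp
    hence "x > 0" using a assms by (metis mult_is_0 not_gr0)
    have "e dvd d * x" using ex by (metis dvd_triv_left)
    hence "e dvd x" using assms(4) by (simp add: coprime_dvd_mult_right_iff)
    hence "e \<le> x" using \<open>x > 0\<close> by (simp add: dvd_imp_le)
    moreover have "x < e" using assms(1) by (simp add: x_def)
    ultimately show False by simp
  qed
  have Mx: "Max (sum_list ` ?F) = e-1"
  proof (rule antisym)
    show "Max (sum_list ` ?F) \<le> e-1" using fin c1F le by (intro Max.boundedI) auto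
    have "sum_list c1 \<le> Max (sum_list ` ?F)" using fin c1F by (intro Max_ge) auto
    then show "e-1 \<le> Max (sum_list ` ?F)" using c1 by simp
  qed
  let ?M = "{c. length c = Suc t \<and> sum_list c = e-1 \<and> WW c = e-1}"
  have M: "{c \<in> ?F. sum_list c = e-1} = ?M"
    using assms(2) by (auto simp: FFs_def)
  define psi where "psi mu = map (\<lambda>i. if i = 0 then (e-1) - (\<Sum>j\<in>{1..t}. mu j) else mu i) [0..<Suc t]"
    for mu :: "nat \<Rightarrow> nat"
  have "inj_on psi (Pt t (e-1))"
  proof (rule inj_onI)
    fix mu mu' assume m: "mu \<in> Pt t (e-1)" and m': "mu' \<in> Pt t (e-1)" and eq: "psi mu = psi mu'"
    show "mu = mu'"
    proof
      fix i show "mu i = mu' i"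
      proof (cases "i \<in> {1..t}")
        case True
        then have "psi mu ! i = mu i" "psi mu' ! i = mu' i"
          by (auto simp: psi_def nth_map simp del: upt_Suc)
        then show ?thesis using eq by simp
      next
        case False
        have "mu i = 0" "mu' i = 0" using m m' False unfolding Pt_def by blast+
        then show ?thesis by simp
      qed
    qed
  qed
  moreover have "psi ` Pt t (e-1) \<subseteq> ?M"
  proof
    fix x assume "x \<in> psi ` Pt t (e-1)"
    then obtain mu where m: "mu \<in> Pt t (e-1)" and x: "x = psi mu" by auto
    have l: "length x = Suc t" by (simp add: x psi_def)
    have s1: "(\<Sum>i\<in>{1..t}. i * mu i) = e - 1" using m by (simp add: Pt_def)
    have nx: "x ! i = mu i" if "i \<in> {1..t}" for i
      using that by (auto simp: x psi_def nth_map simp del: upt_Suc)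
    have "WW x = (\<Sum>i\<in>{1..t}. i * mu i)" using WW_alt[OF l] nx by simp
    hence w: "WW x = e-1" using s1 by simp
    have "(\<Sum>j\<in>{1..t}. mu j) \<le> (\<Sum>i\<in>{1..t}. i * mu i)" by (rule sum_mono) auto
    hence sle: "(\<Sum>j\<in>{1..t}. mu j) \<le> e-1" using s1 by simp
    have x0: "x ! 0 = (e-1) - (\<Sum>j\<in>{1..t}. mu j)" by (simp add: x psi_def del: upt_Suc)
    have "sum_list x = x!0 + (\<Sum>j\<in>{1..t}. mu j)" using SL_alt[OF l] nx by simp
    hence "sum_list x = e-1" using x0 sle by simp
    then show "x \<in> ?M" using l w by simp
  qed
  moreover have "finite ?M" using fin M by (metis (no_types, lifting) finite_subset mem_Collect_eq subsetI)
  ultimately have "card (Pt t (e-1)) \<le> card ?M" by (intro card_inj_on_le)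
  then show "card (Pt t (e-1)) \<le> card {c \<in> ?F. sum_list c = Max (sum_list ` ?F)}" using Mx M by simp
qed

theorem proposition4p14:
  fixes e d t :: nat and S :: "nat set"
  assumes "e > 0" and "d > 0" and "t > 0"
    and "gcd e d = 1"
    and "S = monoid_gen ((\<lambda>i. e + i * d) ` {0..t})"
    and "numerical_semigroup S"
    and "minimal_generators S = (\<lambda>i. e + i * d) ` {0..t}"
  shows "dmax S = num_partitions_bounded (e - 1) t"
proof -
  define g where "g = (\<lambda>i::nat. e + i * d)"
  have injg: "inj_on g {0..t}" using assms(2) by (auto simp: inj_on_def g_def)
  have sg: "sorted_wrt (<) (map g [0..<Suc t])"
    using assms(2) by (auto simp: sorted_wrt_map g_def sorted_wrt_iff_nth_less simp del: upt_Suc)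
  have gens: "gens S = map g [0..<Suc t]"
    unfolding gens_def assms(7) g_def[symmetric]
  proof (subst sorted_list_of_set_unique[symmetric])
    show "sorted_wrt (<) (map g [0..<Suc t]) \<and> set (map g [0..<Suc t]) = g ` {0..t} \<and>
       length (map g [0..<Suc t]) = card (g ` {0..t})"
      using sg injg by (auto simp: card_image simp del: upt_Suc)
  qed auto
  have Fchar: "factorizations n S = FFs e d t n" for n
  proof -
    have "(\<Sum>i<length (gens S). c ! i * gens S ! i) = (\<Sum>i<Suc t. c!i * (e + i*d))" for c
      unfolding gens by (intro sum.cong) (auto simp: g_def nth_map simp del: upt_Suc)
    then show ?thesis
      unfolding factorizations_def FFs_def using val_eq[of _ t e d]
      by (auto simp: gens simp del: upt_Suc)
  qed
  have Schar: "n \<in> S \<longleftrightarrow> FFs e d t n \<noteq> {}" for n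
  proof
    assume "n \<in> S"
    then obtain f where f: "n = (\<Sum>a\<in>g ` {0..t}. f a * a)"
      using assms(5) by (auto simp: monoid_gen_def g_def)
    define c where "c = map (\<lambda>i. f (g i)) [0..<Suc t]"
    have "n = (\<Sum>i\<in>{0..t}. f (g i) * g i)" using f by (simp add: sum.reindex[OF injg])
    also have "\<dots> = (\<Sum>i<Suc t. c!i * (e + i*d))"
      by (rule sum.cong) (auto simp: c_def g_def nth_map simp del: upt_Suc)
    also have "\<dots> = e * sum_list c + d * WW c" by (rule val_eq) (simp add: c_def)
    finally have "c \<in> FFs e d t n" by (simp add: FFs_def c_def)
    then show "FFs e d t n \<noteq> {}" by auto
  next
    assume "FFs e d t n \<noteq> {}"
    then obtain c where c: "length c = Suc t" "e * sum_list c + d * WW c = n" by (auto simp: FFs_def)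
    define f where "f a = c ! ((a - e) div d)" for a
    have "(\<Sum>a\<in>g ` {0..t}. f a * a) = (\<Sum>i\<in>{0..t}. f (g i) * g i)" by (simp add: sum.reindex[OF injg])
    also have "\<dots> = (\<Sum>i<Suc t. c!i * (e + i*d))"
      using assms(2) by (intro sum.cong) (auto simp: f_def g_def)
    also have "\<dots> = n" using val_eq[OF c(1)] c(2) by simp
    finally show "n \<in> S" using assms(5) unfolding monoid_gen_def g_def by auto
  qed
  have fl: "fact_len = sum_list" by (rule ext) (simp add: fact_len_def)
  have de: "dmax_elem n S = card {c \<in> FFs e d t n. sum_list c = Max (sum_list ` FFs e d t n)}" for n
    by (simp add: dmax_elem_def ord_S_def Fchar fl)
  have P: "num_partitions_bounded (e - 1) t = card (Pt t (e-1))"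
    by (simp add: num_partitions_bounded_def Pt_def)
  have cop: "coprime e d" using assms(4) by (simp add: coprime_iff_gcd_eq_1)
  define n0 where "n0 = e*(e-1) + d*(e-1)"
  have n0S: "n0 \<in> S" using attain(1)[OF assms(1-3) cop] Schar n0_def by simp
  let ?D = "{dmax_elem n S | n. n \<in> S}"
  have ub: "x \<le> card (Pt t (e-1))" if "x \<in> ?D" for x
    using that bound[OF assms(1-3)] Schar de by auto
  have finD: "finite ?D" by (rule finite_subset[of _ "{..card (Pt t (e-1))}"]) (use ub in auto)
  have inD: "dmax_elem n0 S \<in> ?D" using n0S by auto
  have "card (Pt t (e-1)) \<le> dmax_elem n0 S" using attain(2)[OF assms(1-3) cop] de n0_def by simp
  hence "Max ?D = card (Pt t (e-1))"
    using finD inD ub by (intro antisym Max.boundedI) (auto intro: order.trans[OF _ Max_ge])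
  then show ?thesis unfolding dmax_def P .
qed

end
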